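(* Let $n,p\ge1$ be integers and let $\mathbf{A}^{p+1}_{n+1}$ be as defined in the context. Then $\mathbf{A}^{p+1}_{n+1}$ is local: it has a unique maximal proper implicative filter, namely ${\uparrow}\langle(0,0),p\rangle=\{a\in A:a\ge\langle(0,0),p\rangle\}$; consequently $\mathrm{Rad}(\mathbf{A}^{p+1}_{n+1})={\uparrow}\langle(0,0),p\rangle$.
   Context: Order $\mathbb{Z}\times\mathbb{Z}$ lexicographically: $(m,r)\preccurlyeq(k,s)$ iff $m<k$, or $m=k$ and $r\le s$; addition/subtraction of pairs is componentwise, and $\min,\max$ of pairs refer to $\preccurlyeq$. For an integer $n\ge1$ let $L^\omega_{n+1}=\{(m,r)\in\mathbb{Z}^2:(0,0)\preccurlyeq(m,r)\preccurlyeq(n,0)\}$ with $x\ast y=\max\{(0,0),x+y-(n,0)\}$ and $x\to y=\min\{(n,0),(n,0)-x+y\}$. For an integer $p\ge1$ let $L_{p+1}=\{0,1,\dots,p\}$ with $\alpha\ast\beta=\max\{0,\alpha+\beta-p\}$. Define $$A=A^{p+1}_{n+1}=\{\langle(m,r),\alpha\rangle:(m,r)\in L^\omega_{n+1},\ \alpha\in\{0,p\}\}\cup\{\langle(m,r),\alpha\rangle:(0,0)\preccurlyeq(m,r)\preccurlyeq(n-1,0),\ 0<\alpha<p\}.$$ Order: $\langle(m,r),\alpha\rangle\le\langle(k,s),\beta\rangle$ iff one of: (o1) $\alpha\neq0$, $\alpha\le\beta$ and $(m,r)\preccurlyeq(k,s)$; (o2) $\alpha=\beta=0$ and $(k,s)\preccurlyeq(m,r)$;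 (o3) $\alpha=0$, $\beta\ne0$ and $(n-1,0)\preccurlyeq(m+k,r+s)$. $\wedge,\vee$ denote meet and join for $\le$. Put $\bot=\langle(n,0),0\rangle$, $\top=\langle(n,0),p\rangle$. For $a=\langle(m,r),\alpha\rangle$, $b=\langle(k,s),\beta\rangle\in A$ define $a\odot b$ by: (P1) if $\alpha,\beta\ge1$ and $\alpha+\beta>p$: $a\odot b=\langle(m,r)\ast(k,s),\alpha+\beta-p\rangle$; (P2) if $\alpha,\beta\ge1$ and $\alpha+\beta\le p$: $a\odot b=\langle\min\{(n,0),(2n-(m+k+1),-(r+s))\},0\rangle$; (P3) if $\alpha\ge1$, $\beta=0$: $a\odot b=\langle(m,r)\to(k,s),0\rangle$, and if $\alpha=0$, $\beta\ge1$: $a\odot b=\langle(k,s)\to(m,r),0\rangle$; (P4) if $\alpha=\beta=0$: $a\odot b=\langle\min\{(n,0),(m+k+1,r+s)\},0\rangle$. Define $\sim\langle(m,r),\alpha\rangle=\langle(m,r),p-\alpha\rangle$ if $\alpha\in\{0,p\}$, and $\sim\langle(m,r),\alpha\rangle=\langle(n-1-m,-r),p-\alpha\rangle$ if $0<\alpha<p$. Define $a\Rightarrow b=\sim(a\odot\sim b)$. The algebra $\mathbf{A}^{p+1}_{n+1}$ is $\langle A;\odot,\Rightarrow,\wedge,\vee,\bot,\top\rangle$. An implicative filter is a subset $F\subseteq A$ with $\top\in F$, closed under $\odot$, and upward closed w.r.t. $\le$; it is proper if $F\ne A$. $\mathrm{Rad}(\mathbf{A}^{p+1}_{n+1})$ is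 the intersection of all maximal proper implicative filters. *)

theory Defs
  imports Main
begin

type_synonym zz = "int \<times> int"
type_synonym elt = "zz \<times> int"

definition lexle :: "zz \<Rightarrow> zz \<Rightarrow> bool" where
  "lexle x y \<longleftrightarrow> fst x < fst y \<or> (fst x = fst y \<and> snd x \<le> snd y)"

definition lexmax :: "zz \<Rightarrow> zz \<Rightarrow> zz" where
  "lexmax x y = (if lexle x y then y else x)"

definition lexmin :: "zz \<Rightarrow> zz \<Rightarrow> zz" where
  "lexmin x y = (if lexle x y then x else y)"

definition padd :: "zz \<Rightarrow> zz \<Rightarrow> zz" where
  "padd x y = (fst x + fst y, snd x + snd y)"

definition psub :: "zz \<Rightarrow> zz \<Rightarrow> zz" where
  "psub x y = (fst x - fst y, snd x - snd y)"

definition Lstar :: "int \<Rightarrow> zz \<Rightarrow> zz \<Rightarrow> zz" where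
  "Lstar n x y = lexmax (0,0) (psub (padd x y) (n,0))"

definition Limp :: "int \<Rightarrow> zz \<Rightarrow> zz \<Rightarrow> zz" where
  "Limp n x y = lexmin (n,0) (padd (psub (n,0) x) y)"

definition carrierA :: "int \<Rightarrow> int \<Rightarrow> elt set" where
  "carrierA n p =
     {(x, \<alpha>). lexle (0,0) x \<and> lexle x (n,0) \<and> (\<alpha> = 0 \<or> \<alpha> = p)}
   \<union> {(x, \<alpha>). lexle (0,0) x \<and> lexle x (n - 1, 0) \<and> 0 < \<alpha> \<and> \<alpha> < p}"

definition leA :: "int \<Rightarrow> int \<Rightarrow> elt \<Rightarrow> elt \<Rightarrow> bool" where
  "leA n p a b = (let (x, \<alpha>) = a; (y, \<beta>) = b in
      (\<alpha> \<noteq> 0 \<and> \<alpha> \<le> \<beta> \<and> lexle x y)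
    \<or> (\<alpha> = 0 \<and> \<beta> = 0 \<and> lexle y x)
    \<or> (\<alpha> = 0 \<and> \<beta> \<noteq> 0 \<and> lexle (n - 1, 0) (padd x y)))"

definition prodA :: "int \<Rightarrow> int \<Rightarrow> elt \<Rightarrow> elt \<Rightarrow> elt" where
  "prodA n p a b = (let (x, \<alpha>) = a; (y, \<beta>) = b in
     if 1 \<le> \<alpha> \<and> 1 \<le> \<beta> \<and> \<alpha> + \<beta> > p then (Lstar n x y, \<alpha> + \<beta> - p)
     else if 1 \<le> \<alpha> \<and> 1 \<le> \<beta> then
       (lexmin (n,0) (2*n - (fst x + fst y + 1), - (snd x + snd y)), 0)
     else if 1 \<le> \<alpha> \<and> \<beta> = 0 then (Limp n x y, 0)
     else if \<alpha> = 0 \<and> 1 \<le> \<beta> then (Limp n y x, 0)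
     else (lexmin (n,0) (fst x + fst y + 1, snd x + snd y), 0))"

definition topA :: "int \<Rightarrow> int \<Rightarrow> elt" where
  "topA n p = ((n,0), p)"

definition impl_filter :: "int \<Rightarrow> int \<Rightarrow> elt set \<Rightarrow> bool" where
  "impl_filter n p F \<longleftrightarrow>
     F \<subseteq> carrierA n p \<and> topA n p \<in> F
     \<and> (\<forall>a\<in>F. \<forall>b\<in>F. prodA n p a b \<in> F)
     \<and> (\<forall>a\<in>F. \<forall>b\<in>carrierA n p. leA n p a b \<longrightarrow> b \<in> F)"

definition proper_filter :: "int \<Rightarrow> int \<Rightarrow> elt set \<Rightarrow> bool" where
  "proper_filter n p F \<longleftrightarrow> impl_filter n p F \<and> F \<noteq> carrierA n p"

definition maximal_filter :: "int \<Rightarrow> int \<Rightarrow> elt set \<Rightarrow> bool" where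
  "maximal_filter n p F \<longleftrightarrow> proper_filter n p F \<and>
     (\<forall>G. proper_filter n p G \<and> F \<subseteq> G \<longrightarrow> G = F)"

definition Rad :: "int \<Rightarrow> int \<Rightarrow> elt set" where
  "Rad n p = \<Inter> {F. maximal_filter n p F}"

definition upsetA :: "int \<Rightarrow> int \<Rightarrow> elt \<Rightarrow> elt set" where
  "upsetA n p a = {b \<in> carrierA n p. leA n p a b}"

end

theory Submission
  imports Defs
begin

lemma bot_le:
  assumes "b \<in> carrierA n p" "1 \<le> n"
  shows "leA n p ((n,0),0) b"
  using assms by (auto simp: carrierA_def leA_def lexle_def padd_def)

lemma filt_bot_all:
  assumes "impl_filter n p F" "1 \<le> n" "((n,0),0) \<in> F"
  shows "F = carrierA n p"
  using assms bot_le[of _ n p] unfolding impl_filter_def by blast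

lemma zero_case:
  assumes F: "impl_filter n p F" and n: "1 \<le> n"
  shows "((m,r),0) \<in> F \<Longrightarrow> 0 \<le> m \<Longrightarrow> ((n,0),0) \<in> F"
proof (induction "nat (n - m)" arbitrary: m r rule: less_induct)
  case less
  have cl: "prodA n p ((m,r),0) ((m,r),0) \<in> F"
    using F less.prems unfolding impl_filter_def by blast
  have sq: "prodA n p ((m,r),0) ((m,r),0) = (lexmin (n,0) (m+m+1, r+r), 0)"
    by (simp add: prodA_def)
  show ?case
  proof (cases "m+m+1 > n")
    case True
    then have "lexmin (n,0) (m+m+1, r+r) = (n,0)" by (simp add: lexmin_def lexle_def)
    then show ?thesis using cl sq by simp
  next
    case False
    obtain s where e: "lexmin (n,0) (m+m+1, r+r) = (m+m+1, s)"
    proof (cases "n = m+m+1 \<and> 0 \<le> r+r")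
      case True then show ?thesis using that by (auto simp: lexmin_def lexle_def)
    next
      case f2: False then show ?thesis using that False by (auto simp: lexmin_def lexle_def)
    qed
    have "nat (n - (m+m+1)) < nat (n - m)" using False less.prems by simp
    from less.hyps[OF this, of s] cl sq e less.prems show ?thesis by simp
  qed
qed

lemma mid_case:
  assumes F: "impl_filter n p F" and n: "1 \<le> n"
  shows "(x,\<alpha>) \<in> F \<Longrightarrow> 0 < \<alpha> \<Longrightarrow> \<alpha> < p \<Longrightarrow> ((n,0),0) \<in> F"
proof (induction "nat \<alpha>" arbitrary: x \<alpha> rule: less_induct)
  case less
  have cl: "prodA n p (x,\<alpha>) (x,\<alpha>) \<in> F"
    using F less.prems unfolding impl_filter_def by blast
  show ?case
  proof (cases "\<alpha> + \<alpha> > p")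
    case True
    have sq: "prodA n p (x,\<alpha>) (x,\<alpha>) = (Lstar n x x, \<alpha>+\<alpha>-p)"
      using True less.prems by (simp add: prodA_def split_beta)
    have "nat (\<alpha>+\<alpha>-p) < nat \<alpha>" using True less.prems by simp
    from less.hyps[OF this, of "Lstar n x x"] cl sq True less.prems show ?thesis by simp
  next
    case False
    have sq: "prodA n p (x,\<alpha>) (x,\<alpha>) =
       (lexmin (n,0) (2*n - (fst x + fst x + 1), - (snd x + snd x)), 0)"
      using False less.prems by (simp add: prodA_def split_beta)
    have xc: "(x,\<alpha>) \<in> carrierA n p" using F less.prems unfolding impl_filter_def by blast
    then have "fst x \<le> n" using less.prems by (auto simp: carrierA_def lexle_def)
    then have "0 \<le> fst (lexmin (n,0) (2*n - (fst x + fst x + 1), - (snd x + snd x)))"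
      using n xc less.prems by (auto simp: lexmin_def lexle_def carrierA_def)
    then show ?thesis using zero_case[OF F n] cl sq
      by (metis prod.collapse)
  qed
qed

lemma key:
  assumes F: "impl_filter n p F" and n: "1 \<le> n" and a: "a \<in> F" "snd a \<noteq> p"
  shows "F = carrierA n p"
proof -
  obtain x \<alpha> where ax: "a = (x,\<alpha>)" by (cases a)
  have ac: "a \<in> carrierA n p" using F a unfolding impl_filter_def by blast
  then have "(\<alpha> = 0 \<and> 0 \<le> fst x) \<or> (0 < \<alpha> \<and> \<alpha> < p)"
    using a ax by (auto simp: carrierA_def lexle_def)
  then have "((n,0),0) \<in> F"
  proof
    assume h: "\<alpha> = 0 \<and> 0 \<le> fst x"
    show ?thesis using zero_case[OF F n, of "fst x" "snd x"] h a ax by simp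
  next
    assume "0 < \<alpha> \<and> \<alpha> < p"
    then show ?thesis using mid_case[OF F n, of x \<alpha>] a ax by simp
  qed
  then show ?thesis using filt_bot_all[OF F n] by simp
qed

lemma U_eq:
  assumes "1 \<le> p"
  shows "upsetA n p ((0,0),p) = {(x,\<beta>). lexle (0,0) x \<and> lexle x (n,0) \<and> \<beta> = p}"
  using assms by (auto simp: upsetA_def carrierA_def leA_def lexle_def)

lemma U_proper:
  assumes n: "1 \<le> n" and p: "1 \<le> p"
  shows "proper_filter n p (upsetA n p ((0,0),p))"
proof -
  have "((n,0),0) \<in> carrierA n p" using n by (auto simp: carrierA_def lexle_def)
  moreover have "((n,0),0) \<notin> upsetA n p ((0,0),p)" using U_eq[OF p] p by auto
  moreover have "topA n p \<in> upsetA n p ((0,0),p)" using U_eq[OF p] n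
    by (auto simp: topA_def lexle_def)
  moreover have "upsetA n p ((0,0),p) \<subseteq> carrierA n p" by (auto simp: upsetA_def)
  moreover have "\<forall>a\<in>upsetA n p ((0,0),p). \<forall>b\<in>upsetA n p ((0,0),p).
      prodA n p a b \<in> upsetA n p ((0,0),p)"
    using p unfolding U_eq[OF p]
    by (auto simp: prodA_def Lstar_def lexmax_def lexle_def psub_def padd_def)
  moreover have "\<forall>a\<in>upsetA n p ((0,0),p). \<forall>b\<in>carrierA n p. leA n p a b \<longrightarrow>
      b \<in> upsetA n p ((0,0),p)"
    using p unfolding U_eq[OF p]
    by (auto simp: carrierA_def leA_def lexle_def)
  ultimately show ?thesis unfolding proper_filter_def impl_filter_def by blast
qed

lemma proper_sub:
  assumes n: "1 \<le> n" and p: "1 \<le> p" and G: "proper_filter n p G"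
  shows "G \<subseteq> upsetA n p ((0,0),p)"
proof
  fix a assume a: "a \<in> G"
  have Gi: "impl_filter n p G" "G \<noteq> carrierA n p" using G by (auto simp: proper_filter_def)
  then have "snd a = p" using key[OF Gi(1) n a] by blast
  moreover have "a \<in> carrierA n p" using Gi a by (auto simp: impl_filter_def)
  ultimately show "a \<in> upsetA n p ((0,0),p)" using U_eq[OF p] p
    by (auto simp: carrierA_def lexle_def)
qed

theorem corollary3p3:
  fixes n p :: int
  assumes "1 \<le> n" and "1 \<le> p"
  shows "{F. maximal_filter n p F} = {upsetA n p ((0,0), p)}
         \<and> Rad n p = upsetA n p ((0,0), p)"
proof -
  have 1: "{F. maximal_filter n p F} = {upsetA n p ((0,0), p)}"
  proof (intro set_eqI iffI)
    fix F assume "F \<in> {F. maximal_filter n p F}"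
    then have "maximal_filter n p F" by simp
    then show "F \<in> {upsetA n p ((0,0), p)}"
      using U_proper[OF assms] proper_sub[OF assms, of F]
      unfolding maximal_filter_def by blast
  next
    fix F assume "F \<in> {upsetA n p ((0,0), p)}"
    then show "F \<in> {F. maximal_filter n p F}"
      using U_proper[OF assms] proper_sub[OF assms]
      unfolding maximal_filter_def by blast
  qed
  then show ?thesis unfolding Rad_def by simp
qed

end
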